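(* Let $N=\{1,\dots,n\}$ be agents and $M$ a finite set of chores, where each agent $i$ has an additive valuation $V_i$ with $V_i(\{j\})\le 0$ for all $j\in M$ and $V_i(M)=-1$, and shares $s_i\in(0,1]$ with $\sum_i s_i=1$. Let $X=\langle X_1,\dots,X_n\rangle$ be the allocation that assigns all chores of $M$ to a single agent with the largest share (ties broken arbitrarily) and nothing to all other agents. Then $V_i(X_i)\ge n\,\mathsf{WMMS}_i$ for every $i\in N$.
   Context: For agent $i$, $\mathsf{WMMS}_i:=\max_{\langle Y_1,\dots,Y_n\rangle\in\Pi(M)}\min_{k\in N}V_i(Y_k)\frac{s_i}{s_k}$, where $\Pi(M)$ is the set of ordered partitions of $M$ into $n$ possibly empty bundles (bundle $Y_k$ for agent $k$). Valuations are additive: $V_i(S)=\sum_{j\in S}V_i(\{j\})$. *)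

theory Defs
  imports Complex_Main
begin

text \<open>Agents are 1..n. A chore valuation of agent i is given by its values on single chores,
  V i j = V_i({j}); additive extension to bundles is sum (V i) S.\<close>

definition ordered_partitions :: "nat \<Rightarrow> 'c set \<Rightarrow> (nat \<Rightarrow> 'c set) set" where
  "ordered_partitions n M =
     {Y. (\<forall>k\<in>{1..n}. \<forall>l\<in>{1..n}. k \<noteq> l \<longrightarrow> Y k \<inter> Y l = {})
       \<and> (\<Union>k\<in>{1..n}. Y k) = M
       \<and> (\<forall>k. k \<notin> {1..n} \<longrightarrow> Y k = {})}"

definition WMMS :: "nat \<Rightarrow> 'c set \<Rightarrow> (nat \<Rightarrow> 'c \<Rightarrow> real) \<Rightarrow> (nat \<Rightarrow> real) \<Rightarrow> nat \<Rightarrow> real" where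
  "WMMS n M V s i =
     Max ((\<lambda>Y. Min ((\<lambda>k. sum (V i) (Y k) * (s i / s k)) ` {1..n})) ` ordered_partitions n M)"

end

theory Submission
  imports Defs "HOL-Library.FuncSet"
begin

lemma part_sum:
  fixes V :: "'c \<Rightarrow> real"
  assumes "finite M" "Y \<in> ordered_partitions n M"
  shows "(\<Sum>k=1..n. sum V (Y k)) = sum V M"
proof -
  have d: "\<forall>k\<in>{1..n}. \<forall>l\<in>{1..n}. k \<noteq> l \<longrightarrow> Y k \<inter> Y l = {}"
    and u: "(\<Union>k\<in>{1..n}. Y k) = M" using assms(2) unfolding ordered_partitions_def by auto
  have f: "\<forall>k\<in>{1..n}. finite (Y k)" using u assms(1) by (metis UN_upper finite_subset)
  have "sum V (\<Union>k\<in>{1..n}. Y k) = (\<Sum>k=1..n. sum V (Y k))"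
    by (rule sum.UNION_disjoint) (use f d in auto)
  with u show ?thesis by simp
qed

lemma min_bound:
  fixes V :: "nat \<Rightarrow> 'c \<Rightarrow> real"
  assumes "finite M" "Y \<in> ordered_partitions n M" "n \<ge> 1"
    and "sum (V i) M = -1" and "\<forall>k\<in>{1..n}. 0 < s k"
    and "(\<Sum>k=1..n. s k) = 1" and "0 < s i"
  shows "Min ((\<lambda>k. sum (V i) (Y k) * (s i / s k)) ` {1..n}) \<le> - s i"
proof -
  have "\<exists>k\<in>{1..n}. sum (V i) (Y k) \<le> - s k"
  proof (rule ccontr)
    assume "\<not> ?thesis"
    hence "\<forall>k\<in>{1..n}. - s k < sum (V i) (Y k)" by auto
    hence "(\<Sum>k=1..n. - s k) < (\<Sum>k=1..n. sum (V i) (Y k))"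
      using assms(3) by (intro sum_strict_mono) auto
    also have "\<dots> = -1" using part_sum[OF assms(1,2)] assms(4) by simp
    finally show False using assms(6) by (simp add: sum_negf)
  qed
  then obtain k where k: "k \<in> {1..n}" "sum (V i) (Y k) \<le> - s k" by auto
  have sk: "0 < s k" using k assms(5) by auto
  have "sum (V i) (Y k) * (s i / s k) \<le> - s k * (s i / s k)"
    using k sk assms(7) by (intro mult_right_mono) auto
  also have "\<dots> = - s i" using sk by simp
  finally have "sum (V i) (Y k) * (s i / s k) \<le> - s i" .
  moreover have "Min ((\<lambda>k. sum (V i) (Y k) * (s i / s k)) ` {1..n}) \<le> sum (V i) (Y k) * (s i / s k)"
    using k by (intro Min_le) auto
  ultimately show ?thesis by linarith
qed

lemma parts_finite:
  assumes "finite M"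
  shows "finite (ordered_partitions n M)"
proof -
  have "ordered_partitions n M \<subseteq> (\<lambda>f k. if k \<in> {1..n} then f k else {}) ` (PiE {1..n} (\<lambda>_. Pow M))"
  proof
    fix Y assume Y: "Y \<in> ordered_partitions n M"
    hence u: "(\<Union>k\<in>{1..n}. Y k) = M" and o: "\<forall>k. k \<notin> {1..n} \<longrightarrow> Y k = {}"
      unfolding ordered_partitions_def by auto
    have "Y = (\<lambda>f k. if k \<in> {1..n} then f k else {}) (restrict Y {1..n})"
      using o by (auto simp: fun_eq_iff restrict_def)
    moreover have "restrict Y {1..n} \<in> PiE {1..n} (\<lambda>_. Pow M)" using u by auto
    ultimately show "Y \<in> (\<lambda>f k. if k \<in> {1..n} then f k else {}) ` (PiE {1..n} (\<lambda>_. Pow M))"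
      by blast
  qed
  moreover have "finite (PiE {1..n} (\<lambda>_. Pow M))" using assms by (intro finite_PiE) auto
  ultimately show ?thesis by (meson finite_imageI finite_subset)
qed

lemma wmms_bound:
  fixes V :: "nat \<Rightarrow> 'c \<Rightarrow> real"
  assumes "finite M" "n \<ge> 1"
    and "sum (V i) M = -1" and "\<forall>k\<in>{1..n}. 0 < s k"
    and "(\<Sum>k=1..n. s k) = 1" and "0 < s i"
  shows "WMMS n M V s i \<le> - s i"
proof -
  let ?Y = "\<lambda>k::nat. if k = 1 then M else {}"
  have "?Y \<in> ordered_partitions n M" using assms(2) unfolding ordered_partitions_def
    by (auto split: if_splits)
  hence ne: "ordered_partitions n M \<noteq> {}" by auto
  have mb: "\<And>Y. Y \<in> ordered_partitions n M \<Longrightarrow>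
      Min ((\<lambda>k. sum (V i) (Y k) * (s i / s k)) ` {1..n}) \<le> - s i"
    using min_bound assms by blast
  show ?thesis unfolding WMMS_def
    using parts_finite[OF assms(1)] ne mb
    by (subst Max_le_iff) auto
qed

theorem lemma2:
  fixes n :: nat and M :: "'c set" and V :: "nat \<Rightarrow> 'c \<Rightarrow> real" and s :: "nat \<Rightarrow> real"
    and X :: "nat \<Rightarrow> 'c set" and a :: nat
  assumes "finite M"
    and "\<forall>i\<in>{1..n}. \<forall>j\<in>M. V i j \<le> 0"
    and "\<forall>i\<in>{1..n}. sum (V i) M = -1"
    and "\<forall>i\<in>{1..n}. 0 < s i \<and> s i \<le> 1"
    and "(\<Sum>i=1..n. s i) = 1"
    and "a \<in> {1..n}"
    and "\<forall>k\<in>{1..n}. s k \<le> s a"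
    and "X a = M"
    and "\<forall>k\<in>{1..n}. k \<noteq> a \<longrightarrow> X k = {}"
  shows "\<forall>i\<in>{1..n}. sum (V i) (X i) \<ge> real n * WMMS n M V s i"
proof
  fix i assume i: "i \<in> {1..n}"
  have n1: "n \<ge> 1" using assms(6) by auto
  have pos: "\<forall>k\<in>{1..n}. 0 < s k" using assms(4) by auto
  have W: "WMMS n M V s i \<le> - s i"
    using wmms_bound[OF assms(1) n1 _ pos assms(5)] assms(3,4) i by auto
  have si: "0 < s i" using i pos by auto
  have "(\<Sum>k=1..n. s k) \<le> (\<Sum>k=1..n. s a)" using assms(7) by (intro sum_mono) auto
  hence sa: "1 \<le> real n * s a" using assms(5) by simp
  show "sum (V i) (X i) \<ge> real n * WMMS n M V s i"
  proof (cases "i = a")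
    case True
    have "real n * WMMS n M V s i \<le> real n * (- s a)"
      using W True by (intro mult_left_mono) auto
    thus ?thesis using True assms(8) assms(3) i sa by auto
  next
    case False
    have "real n * WMMS n M V s i \<le> real n * (- s i)"
      using W by (intro mult_left_mono) auto
    moreover have "real n * (- s i) \<le> 0" using si by simp
    ultimately show ?thesis using False assms(9) i by auto
  qed
qed

end
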